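(* For every $n\in\mathbb{N}$, \[ t(n)\, n = \sum_{\substack{k\geq 0 \\ T(k)<n}} \left(\sigma^{o}(n- T(k)) - \sigma^{E}(n-T(k))\right). \]
   Context: $\mathbb{N}=\{1,2,3,\ldots\}$, $\mathbb{N}_0=\{0,1,2,\ldots\}$. For $m\in\mathbb{N}_0$, $T(m)=\frac{m(m+1)}{2}$; a number $n\in\mathbb{N}_0$ is triangular if $n=T(m)$ for some $m\in\mathbb{N}_0$, and $t(n)=1$ if $n$ is triangular, $t(n)=0$ otherwise. For $m\in\mathbb{N}$, $\sigma^{o}(m)=\sum_{d\mid m,\ d \text{ odd}} d$ and $\sigma^{E}(m)=\sum_{d\mid m,\ d\text{ even}} d$ (sums over positive divisors). *)

theory Defs
  imports Main
begin

definition T :: "nat \<Rightarrow> nat" where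
  "T m = m * (m + 1) div 2"

definition triangular :: "nat \<Rightarrow> bool" where
  "triangular n \<longleftrightarrow> (\<exists>m. n = T m)"

definition t :: "nat \<Rightarrow> nat" where
  "t n = (if triangular n then 1 else 0)"

definition sigma_odd :: "nat \<Rightarrow> nat" where
  "sigma_odd m = (\<Sum>d\<in>{d. d dvd m \<and> odd d}. d)"

definition sigma_even :: "nat \<Rightarrow> nat" where
  "sigma_even m = (\<Sum>d\<in>{d. d dvd m \<and> even d}. d)"

end

theory Submission
  imports Defs
begin

definition SS :: "int \<Rightarrow> (int\<times>int\<times>int) set" where
 "SS N = {(u,d,e). odd u \<and> d \<ge> 1 \<and> e \<ge> 1 \<and> u^2 + 8*d*e = N}"

lemma SS_iff [simp]: "(u,d,e) \<in> SS N \<longleftrightarrow> odd u \<and> d \<ge> 1 \<and> e \<ge> 1 \<and> u^2 + 8*d*e = N"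
  by (simp add: SS_def)

lemma SS_finite: "finite (SS N)"
proof -
  have "SS N \<subseteq> {-\<bar>N\<bar>..\<bar>N\<bar>} \<times> {1..\<bar>N\<bar>} \<times> {1..\<bar>N\<bar>}"
  proof (rule subsetI)
    fix x assume x: "x \<in> SS N"
    obtain u d e where xe: "x = (u,d,e)" by (cases x)
    from x xe have h: "odd u" "d \<ge> 1" "e \<ge> 1" "u^2 + 8*d*e = N" by auto
    have "d \<le> d*e" using h by simp
    moreover have "e \<le> d*e" using h by simp
    moreover have "\<bar>u\<bar> \<le> u^2"
    proof -
      have "\<bar>u\<bar> \<ge> 1" using h(1) by (cases "u = 0") auto
      hence "\<bar>u\<bar> * 1 \<le> \<bar>u\<bar> * \<bar>u\<bar>" by (intro mult_left_mono) auto
      thus ?thesis by (simp add: power2_eq_square abs_mult[symmetric])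
    qed
    moreover have "0 \<le> u^2" by simp
    moreover have "8*d*e = 8*(d*e)" by simp
    ultimately have "d \<le> N \<and> e \<le> N \<and> \<bar>u\<bar> \<le> N" using h(2,3,4) by linarith
    thus "x \<in> {-\<bar>N\<bar>..\<bar>N\<bar>} \<times> {1..\<bar>N\<bar>} \<times> {1..\<bar>N\<bar>}" using h xe by auto
  qed
  thus ?thesis by (rule finite_subset) auto
qed

definition "AA N = {(u,d,e). (u,d,e) \<in> SS N \<and> odd d \<and> d < u + 2*e}"
definition "B0 N = {(u,d,e). (u,d,e) \<in> SS N \<and> odd d \<and> d = u + 2*e}"
definition "Bp N = {(u,d,e). (u,d,e) \<in> SS N \<and> odd d \<and> d > u + 2*e}"
definition "II N = {(u,d,e). (u,d,e) \<in> SS N \<and> even d \<and> d + u > 2*e}"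
definition "JJ N = {(u,d,e). (u,d,e) \<in> SS N \<and> even d \<and> d + u < 2*e}"
definition "Ro N = {(u,d,e). (u,d,e) \<in> SS N \<and> odd d \<and> d + u > 2*e}"
definition "Po N = {(u,d,e). (u,d,e) \<in> SS N \<and> odd d}"
definition "Pe N = {(u,d,e). (u,d,e) \<in> SS N \<and> even d}"

lemma fin_sub: "X \<subseteq> SS N \<Longrightarrow> finite X"
  using SS_finite finite_subset by blast

lemma finites: "finite (AA N)" "finite (B0 N)" "finite (Bp N)" "finite (II N)"
  "finite (JJ N)" "finite (Ro N)" "finite (Po N)" "finite (Pe N)"
  by (rule fin_sub; force simp: AA_def B0_def Bp_def II_def JJ_def Ro_def Po_def Pe_def)+

lemma lemA: "(\<Sum>(u,d,e)\<in>AA N. d) = (\<Sum>(u,d,e)\<in>AA N. u)"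
proof -
  define f where "f = (\<lambda>(u::int,d::int,e::int). (2*d-u, d, e + (u-d) div 2))"
  have key: "\<exists>k. u = d + 2*k" if "odd u" "odd (d::int)" for u d
  proof -
    have "even (u - d)" using that by simp
    then obtain k where "u - d = 2*k" by blast
    thus ?thesis by (intro exI[of _ k]) simp
  qed
  have inv: "f (f x) = x \<and> f x \<in> AA N" if "x \<in> AA N" for x
  proof -
    obtain u d e where xe: "x = (u,d,e)" by (cases x)
    from that xe have h: "odd u" "d \<ge> 1" "e \<ge> 1" "u^2 + 8*d*e = N" "odd d" "d < u + 2*e"
      by (auto simp: AA_def)
    obtain k where k: "u = d + 2*k" using key h by blast
    have fx: "f x = (d - 2*k, d, e + k)" by (simp add: f_def xe k)
    have "(d - 2*k)^2 + 8*d*(e+k) = u^2 + 8*d*e"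
      by (simp add: k power2_eq_square algebra_simps)
    hence "f x \<in> AA N" using h k by (auto simp: fx AA_def)
    moreover have "f (f x) = x" by (simp add: fx f_def xe k)
    ultimately show ?thesis by blast
  qed
  have "(\<Sum>(u,d,e)\<in>AA N. 2*d - u) = (\<Sum>(u,d,e)\<in>AA N. u)"
    by (rule sum.reindex_bij_witness[where i=f and j=f]) (use inv in \<open>auto simp: f_def split: prod.splits\<close>)
  moreover have "(\<Sum>(u,d,e)\<in>AA N. 2*d - u) = 2 * (\<Sum>(u,d,e)\<in>AA N. d) - (\<Sum>(u,d,e)\<in>AA N. u)"
    by (simp add: sum_subtractf sum_distrib_left case_prod_beta)
  ultimately show ?thesis by simp
qed

lemma lemOdd: "(\<Sum>(u,d,e)\<in>Po N. u) = 0"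
proof -
  define f where "f = (\<lambda>(u::int,d::int,e::int). (-u, d, e))"
  have "(\<Sum>(u,d,e)\<in>Po N. -u) = (\<Sum>(u,d,e)\<in>Po N. u)"
    by (rule sum.reindex_bij_witness[where i=f and j=f]) (auto simp: f_def Po_def)
  moreover have "(\<Sum>(u,d,e)\<in>Po N. -u) = - (\<Sum>(u,d,e)\<in>Po N. u)"
    by (simp add: sum_negf case_prod_beta)
  ultimately show ?thesis by simp
qed

lemma lemB: "(\<Sum>(u,d,e)\<in>Bp N. d - u) = (\<Sum>(u,d,e)\<in>II N. d + 2*e)"
proof -
  define j where "j = (\<lambda>(u::int,d::int,e::int). (u + 4*e, d - u - 2*e, e))"
  define i where "i = (\<lambda>(u::int,d::int,e::int). (u - 4*e, d + u - 2*e, e))"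
  have eq1: "(u + 4*e)^2 + 8*(d - u - 2*e)*e = u^2 + 8*d*e" for u d e :: int
    by (simp add: power2_eq_square algebra_simps)
  have eq2: "(u - 4*e)^2 + 8*(d + u - 2*e)*e = u^2 + 8*d*e" for u d e :: int
    by (simp add: power2_eq_square algebra_simps)
  show ?thesis
  proof (rule sum.reindex_bij_witness[where i=i and j=j])
    fix a assume a: "a \<in> Bp N"
    obtain u d e where xe: "a = (u,d,e)" by (cases a)
    from a xe have h: "odd u" "d \<ge> 1" "e \<ge> 1" "u^2 + 8*d*e = N" "odd d" "d > u + 2*e"
      by (auto simp: Bp_def)
    show "i (j a) = a" by (simp add: i_def j_def xe)
    have "(u + 4*e)^2 + 8*(d - u - 2*e)*e = N" using h(4) eq1[of u e d] by simp
    thus "j a \<in> II N" using h by (auto simp: j_def xe II_def)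
    show "(case j a of (u, d, e) \<Rightarrow> d + 2 * e) = (case a of (u, d, e) \<Rightarrow> d - u)"
      by (simp add: j_def xe)
  next
    fix b assume b: "b \<in> II N"
    obtain u d e where xe: "b = (u,d,e)" by (cases b)
    from b xe have h: "odd u" "d \<ge> 1" "e \<ge> 1" "u^2 + 8*d*e = N" "even d" "d + u > 2*e"
      by (auto simp: II_def)
    show "j (i b) = b" by (simp add: i_def j_def xe)
    have "(u - 4*e)^2 + 8*(d + u - 2*e)*e = N" using h(4) eq2[of u e d] by simp
    thus "i b \<in> Bp N" using h by (auto simp: i_def xe Bp_def)
  qed
qed

lemma lemJ: "(\<Sum>(u,d,e)\<in>JJ N. d) = (\<Sum>(u,d,e)\<in>Ro N. 2*e)"
proof -
  define j where "j = (\<lambda>(u::int,d::int,e::int). (u + 2*d, 2*e - u - d, d div 2))"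
  define i where "i = (\<lambda>(u::int,d::int,e::int). (u - 4*e, 2*e, (d + u - 2*e) div 2))"
  show ?thesis
  proof (rule sum.reindex_bij_witness[where i=i and j=j])
    fix a assume a: "a \<in> JJ N"
    obtain u d e where xe: "a = (u,d,e)" by (cases a)
    from a xe have h: "odd u" "d \<ge> 1" "e \<ge> 1" "u^2 + 8*d*e = N" "even d" "d + u < 2*e"
      by (auto simp: JJ_def)
    obtain c where c: "d = 2*c" using h(5) by blast
    have ja: "j a = (u + 4*c, 2*e - u - 2*c, c)" by (simp add: j_def xe c)
    have eq: "(u + 4*c)^2 + 8*(2*e - u - 2*c)*c = u^2 + 8*d*e"
      by (simp add: c power2_eq_square algebra_simps)
    show "i (j a) = a" unfolding ja by (simp add: i_def xe c)
    show "j a \<in> Ro N" using h eq c by (auto simp: ja Ro_def)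
    show "(case j a of (u, d, e) \<Rightarrow> 2 * e) = (case a of (u, d, e) \<Rightarrow> d)"
      unfolding ja by (simp add: xe c)
  next
    fix b assume b: "b \<in> Ro N"
    obtain u d e where xe: "b = (u,d,e)" by (cases b)
    from b xe have h: "odd u" "d \<ge> 1" "e \<ge> 1" "u^2 + 8*d*e = N" "odd d" "d + u > 2*e"
      by (auto simp: Ro_def)
    have "even (d + u)" using h by simp
    then obtain c where c: "d + u = 2*c" by blast
    have ib: "i b = (u - 4*e, 2*e, c - e)" using c by (simp add: i_def xe)
    have eq: "(u - 4*e)^2 + 8*(2*e)*(c - e) = u^2 + 8*d*e"
    proof -
      have dd: "d = 2*c - u" using c by simp
      show ?thesis unfolding dd by (simp add: power2_eq_square algebra_simps)
    qed
    show "j (i b) = b" unfolding ib using c by (simp add: j_def xe)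
    show "i b \<in> JJ N" using h eq c by (auto simp: ib JJ_def)
  qed
qed

lemma lemR: "(\<Sum>(u,d,e)\<in>Ro N. e) = (\<Sum>(u,d,e)\<in>II N. e)"
proof -
  define j where "j = (\<lambda>(u::int,d::int,e::int). (4*e - u, d - 2*e + u, e))"
  have eq: "(4*e - u)^2 + 8*(d - 2*e + u)*e = u^2 + 8*d*e" for u d e :: int
    by (simp add: power2_eq_square algebra_simps)
  show ?thesis
  proof (rule sum.reindex_bij_witness[where i=j and j=j])
    fix a assume a: "a \<in> Ro N"
    obtain u d e where xe: "a = (u,d,e)" by (cases a)
    from a xe have h: "odd u" "d \<ge> 1" "e \<ge> 1" "u^2 + 8*d*e = N" "odd d" "d + u > 2*e"
      by (auto simp: Ro_def)
    show "j (j a) = a" by (simp add: j_def xe)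
    have "(4*e - u)^2 + 8*(d - 2*e + u)*e = N" using h(4) eq[of e u d] by simp
    thus "j a \<in> II N" using h by (auto simp: j_def xe II_def)
    show "(case j a of (u, d, e) \<Rightarrow> e) = (case a of (u, d, e) \<Rightarrow> e)"
      by (simp add: j_def xe)
  next
    fix b assume b: "b \<in> II N"
    obtain u d e where xe: "b = (u,d,e)" by (cases b)
    from b xe have h: "odd u" "d \<ge> 1" "e \<ge> 1" "u^2 + 8*d*e = N" "even d" "d + u > 2*e"
      by (auto simp: II_def)
    show "j (j b) = b" by (simp add: j_def xe)
    have "(4*e - u)^2 + 8*(d - 2*e + u)*e = N" using h(4) eq[of e u d] by simp
    thus "j b \<in> Ro N" using h by (auto simp: j_def xe Ro_def)
  qed
qed

definition w :: "int\<times>int\<times>int \<Rightarrow> int" where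
  "w = (\<lambda>(u,d,e). if odd d then d else -d)"

lemma lemMain: "(\<Sum>x\<in>SS N. w x) = (\<Sum>(u,d,e)\<in>B0 N. d - u)"
proof -
  have s1: "SS N = Po N \<union> Pe N" "Po N \<inter> Pe N = {}" by (auto simp: Po_def Pe_def)
  have s2: "Po N = AA N \<union> (B0 N \<union> Bp N)" "AA N \<inter> (B0 N \<union> Bp N) = {}" "B0 N \<inter> Bp N = {}"
    by (auto simp: Po_def AA_def B0_def Bp_def)
  have par: "aa + a < 2*b \<or> 2*b < aa + a" if "odd a" "even aa" for a aa b :: int
  proof -
    have o: "odd (aa + a)" using that by simp
    have "aa + a \<noteq> 2*b"
    proof
      assume "aa + a = 2*b"
      hence "even (aa + a)" by simp
      thus False using o by simp
    qed
    thus ?thesis by linarith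
  qed
  have s3: "Pe N = II N \<union> JJ N" "II N \<inter> JJ N = {}"
     apply (auto simp: Pe_def II_def JJ_def)
    using par by fastforce
  have "(\<Sum>x\<in>SS N. w x) = (\<Sum>x\<in>Po N. w x) + (\<Sum>x\<in>Pe N. w x)"
    by (simp add: s1 sum.union_disjoint finites)
  moreover have "(\<Sum>x\<in>Po N. w x) = (\<Sum>(u,d,e)\<in>Po N. d)"
    by (rule sum.cong) (auto simp: w_def Po_def)
  moreover have "(\<Sum>x\<in>Pe N. w x) = (\<Sum>(u,d,e)\<in>Pe N. - d)"
    by (rule sum.cong) (auto simp: w_def Pe_def)
  moreover have "(\<Sum>(u,d,e)\<in>Pe N. - d) = - (\<Sum>(u,d,e)\<in>Pe N. d)"
    by (simp add: sum_negf case_prod_beta)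
  moreover have "(\<Sum>(u,d,e)\<in>Po N. d) = (\<Sum>(u,d,e)\<in>AA N. d) + (\<Sum>(u,d,e)\<in>B0 N. d) + (\<Sum>(u,d,e)\<in>Bp N. d)"
    by (simp add: s2 sum.union_disjoint finites)
  moreover have "(\<Sum>(u,d,e)\<in>Po N. u) = (\<Sum>(u,d,e)\<in>AA N. u) + (\<Sum>(u,d,e)\<in>B0 N. u) + (\<Sum>(u,d,e)\<in>Bp N. u)"
    by (simp add: s2 sum.union_disjoint finites)
  moreover have "(\<Sum>(u,d,e)\<in>Pe N. d) = (\<Sum>(u,d,e)\<in>II N. d) + (\<Sum>(u,d,e)\<in>JJ N. d)"
    by (simp add: s3 sum.union_disjoint finites)
  moreover have "(\<Sum>(u,d,e)\<in>Bp N. d - u) = (\<Sum>(u,d,e)\<in>Bp N. d) - (\<Sum>(u,d,e)\<in>Bp N. u)"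
    by (simp add: sum_subtractf case_prod_beta)
  moreover have "(\<Sum>(u,d,e)\<in>B0 N. d - u) = (\<Sum>(u,d,e)\<in>B0 N. d) - (\<Sum>(u,d,e)\<in>B0 N. u)"
    by (simp add: sum_subtractf case_prod_beta)
  moreover have "(\<Sum>(u,d,e)\<in>II N. d + 2*e) = (\<Sum>(u,d,e)\<in>II N. d) + 2 * (\<Sum>(u,d,e)\<in>II N. e)"
    by (simp add: sum.distrib sum_distrib_left case_prod_beta)
  moreover have "(\<Sum>(u,d,e)\<in>Ro N. 2*e) = 2 * (\<Sum>(u,d,e)\<in>Ro N. e)"
    by (simp add: sum_distrib_left case_prod_beta)
  ultimately show ?thesis using lemA[of N] lemOdd[of N] lemB[of N] lemJ[of N] lemR[of N]
    by linarith
qed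

lemma T2: "2 * T k = k * (k + 1)"
proof -
  have "even (k * (k + 1))" by auto
  thus ?thesis by (simp add: T_def)
qed

lemma T2i: "2 * int (T k) = int k * (int k + 1)"
  using arg_cong[OF T2[of k], of int] by (simp add: algebra_simps)

lemma lemB0: "(\<Sum>(u,d,e)\<in>B0 (8*int n+1). d - u) = 2 * int n * int (t n)"
proof (cases "triangular n")
  case True
  then obtain m where nm: "n = T m" by (auto simp: triangular_def)
  have N: "8*int n+1 = (2*int m+1)^2" using T2i[of m] nm by (simp add: power2_eq_square algebra_simps)
  define g where "g = (\<lambda>e::nat. (2*int m+1-4*int e, 2*int m+1-2*int e, int e))"
  have "B0 (8*int n+1) = g ` {1..m}"
  proof
    show "B0 (8*int n+1) \<subseteq> g ` {1..m}"
    proof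
      fix x assume x: "x \<in> B0 (8*int n+1)"
      obtain u d e where xe: "x = (u,d,e)" by (cases x)
      from x xe have h: "odd u" "d \<ge> 1" "e \<ge> 1" "u^2 + 8*d*e = 8*int n+1" "odd d" "d = u + 2*e"
        by (auto simp: B0_def)
      have "(u + 4*e)^2 = u^2 + 8*d*e" using h(6) by (simp add: power2_eq_square algebra_simps)
      hence "(u + 4*e)^2 = (2*int m+1)^2" using h(4) N by simp
      hence "(u + 4*e - (2*int m+1)) * (u + 4*e + (2*int m+1)) = 0"
        by (simp add: power2_eq_square algebra_simps)
      moreover have "u + 4*e + (2*int m+1) > 0" using h by simp
      ultimately have s: "u + 4*e = 2*int m+1" by simp
      have "x = g (nat e)" using s h by (simp add: g_def xe)
      moreover have "nat e \<in> {1..m}" using s h by auto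
      ultimately show "x \<in> g ` {1..m}" by blast
    qed
    show "g ` {1..m} \<subseteq> B0 (8*int n+1)"
    proof
      fix x assume "x \<in> g ` {1..m}"
      then obtain e where e: "e \<in> {1..m}" "x = g e" by blast
      have "(2*int m+1-4*int e)^2 + 8*(2*int m+1-2*int e)*int e = (2*int m+1)^2"
        by (simp add: power2_eq_square algebra_simps)
      thus "x \<in> B0 (8*int n+1)" using e N by (auto simp: g_def B0_def)
    qed
  qed
  moreover have "inj_on g {1..m}" by (auto simp: inj_on_def g_def)
  ultimately have "(\<Sum>(u,d,e)\<in>B0 (8*int n+1). d - u) = (\<Sum>e\<in>{1..m}. 2 * int e)"
    by (simp add: sum.reindex g_def)
  also have "\<dots> = 2 * (\<Sum>e\<in>{Suc 0..m}. int e)" by (simp add: sum_distrib_left)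
  also have "\<dots> = int m * (int m + 1)" by (rule double_gauss_sum_from_Suc_0)
  also have "\<dots> = 2 * int n * int (t n)" using True T2i[of m] nm by (simp add: t_def)
  finally show ?thesis .
next
  case False
  have "B0 (8*int n+1) = {}"
  proof (rule ccontr)
    assume "B0 (8*int n+1) \<noteq> {}"
    then obtain x where x: "x \<in> B0 (8*int n+1)" by blast
    obtain u d e where xe: "x = (u,d,e)" by (cases x)
    from x xe have h: "odd u" "d \<ge> 1" "e \<ge> 1" "u^2 + 8*d*e = 8*int n+1" "odd d" "d = u + 2*e"
      by (auto simp: B0_def)
    have sq: "(u + 4*e)^2 = 8*int n+1" using h(6) h(4) by (simp add: power2_eq_square algebra_simps)
    have "even (u + 4*e - 1)" using h(1) by simp
    then obtain c where c: "u + 4*e - 1 = 2*c" by blast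
    have "c \<ge> 0" using c h by simp
    define m where "m = nat c"
    have s: "u + 4*e = 2*int m+1" using c \<open>c \<ge> 0\<close> by (simp add: m_def)
    have "8*int n+1 = (2*int m+1)^2" using sq s by simp
    hence "8*int n = 4 * (int m * (int m + 1))" by (simp add: power2_eq_square algebra_simps)
    hence "int n = int (T m)" using T2i[of m] by simp
    hence "n = T m" by simp
    thus False using False by (auto simp: triangular_def)
  qed
  thus ?thesis using False by (simp add: t_def)
qed

lemma sig: "m \<ge> 1 \<Longrightarrow> int (sigma_odd m) - int (sigma_even m) =
   (\<Sum>d\<in>{d. d dvd m}. if odd d then int d else - int d)"
proof -
  assume m: "m \<ge> 1"
  have fin: "finite {d. d dvd m}" using m by (simp add: finite_divisors_nat)
  have e1: "{d. d dvd m} \<inter> {x. odd x} = {d. d dvd m \<and> odd d}" by auto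
  have e2: "{d. d dvd m} \<inter> - {x. odd x} = {d. d dvd m \<and> even d}" by auto
  have "(\<Sum>d\<in>{d. d dvd m}. if odd d then int d else - int d) =
     (\<Sum>d\<in>{d. d dvd m \<and> odd d}. int d) + (\<Sum>d\<in>{d. d dvd m \<and> even d}. - int d)"
    using sum.If_cases[OF fin, of odd "\<lambda>d. int d" "\<lambda>d. - int d"] by (simp only: e1 e2)
  also have "\<dots> = int (sigma_odd m) - int (sigma_even m)"
    by (simp add: sigma_odd_def sigma_even_def sum_negf)
  finally show ?thesis by simp
qed

lemma T_ge: "k \<le> T k"
proof -
  have "2 * k \<le> k * (k + 1)" by (cases k) auto
  thus ?thesis using T2[of k] by linarith
qed

definition "Spos N = {(u,d,e). (u,d,e) \<in> SS N \<and> u > 0}"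
definition "Sneg N = {(u,d,e). (u,d,e) \<in> SS N \<and> u < 0}"

lemma link: "(\<Sum>k\<in>{k. T k < n}. int (sigma_odd (n - T k)) - int (sigma_even (n - T k)))
   = (\<Sum>x\<in>Spos (8*int n+1). w x)"
proof -
  define K where "K = {k. T k < n}"
  define D where "D = (\<lambda>k. {d. d dvd (n - T k)})"
  define g where "g = (\<lambda>(k::nat) (d::nat). if odd d then int d else - int d)"
  have finK: "finite K" unfolding K_def
    by (rule finite_subset[of _ "{..<n}"]) (auto dest: order.strict_trans1[OF T_ge])
  have finD: "\<forall>k\<in>K. finite (D k)" by (auto simp: K_def D_def finite_divisors_nat)
  have "(\<Sum>k\<in>{k. T k < n}. int (sigma_odd (n - T k)) - int (sigma_even (n - T k)))
      = (\<Sum>k\<in>K. \<Sum>d\<in>D k. g k d)"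
    unfolding K_def by (rule sum.cong) (auto simp: sig D_def g_def)
  also have "\<dots> = (\<Sum>(k,d)\<in>Sigma K D. g k d)" by (rule sum.Sigma[OF finK finD])
  also have "\<dots> = (\<Sum>x\<in>Spos (8*int n+1). w x)"
  proof (rule sum.reindex_bij_witness[where
        j="\<lambda>(k,d). (2*int k+1, int d, int ((n - T k) div d))"
        and i="\<lambda>(u,d,e). (nat ((u-1) div 2), nat d)"])
    fix a assume a: "a \<in> Sigma K D"
    obtain k d where ae: "a = (k,d)" by (cases a)
    from a ae have h: "T k < n" "d dvd (n - T k)" by (auto simp: K_def D_def)
    obtain q where q: "n - T k = d * q" using h(2) by blast
    have qpos: "d > 0" "q > 0" using q h(1) by (auto intro: Nat.gr0I)
    have dq: "(n - T k) div d = q" using q qpos by simp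
    have nn: "int n = int (T k) + int d * int q" using q h(1) by (metis le_add_diff_inverse less_imp_le of_nat_add of_nat_mult)
    show "(case case a of (k, d) \<Rightarrow> (2 * int k + 1, int d, int ((n - T k) div d)) of
          (u, d, e) \<Rightarrow> (nat ((u - 1) div 2), nat d)) = a"
      by (simp add: ae)
    have eq: "(2*int k+1)^2 + 8*int d*int q = 8*int n+1"
    proof -
      have "(2*int k+1)^2 = 4*(int k*(int k+1)) + 1" by (simp add: power2_eq_square algebra_simps)
      moreover have "8*int d*int q = 8*(int d*int q)" by simp
      ultimately show ?thesis using nn T2i[of k] by linarith
    qed
    show "(case a of (k, d) \<Rightarrow> (2 * int k + 1, int d, int ((n - T k) div d))) \<in> Spos (8 * int n + 1)"
      using qpos eq by (simp add: ae dq Spos_def)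
    show "w (case a of (k, d) \<Rightarrow> (2 * int k + 1, int d, int ((n - T k) div d))) = (case a of (k,d) \<Rightarrow> g k d)"
      by (simp add: ae w_def g_def)
  next
    fix b assume b: "b \<in> Spos (8*int n+1)"
    obtain u d e where be: "b = (u,d,e)" by (cases b)
    from b be have h: "odd u" "d \<ge> 1" "e \<ge> 1" "u^2 + 8*d*e = 8*int n+1" "u > 0"
      by (auto simp: Spos_def)
    have "even (u - 1)" using h(1) by simp
    then obtain c where c: "u - 1 = 2*c" by blast
    have "c \<ge> 0" using c h by simp
    define k where "k = nat c"
    have uk: "u = 2*int k+1" using c \<open>c \<ge> 0\<close> by (simp add: k_def)
    have kk: "nat ((u-1) div 2) = k" using uk by simp
    have "(2*int k+1)^2 = 4*(int k*(int k+1)) + 1" by (simp add: power2_eq_square algebra_simps)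
    moreover have "8*d*e = 8*(d*e)" by simp
    moreover have "u^2 = (2*int k+1)^2" using uk by simp
    ultimately have nn: "int n = int (T k) + d*e" using h(4) uk T2i[of k] by linarith
    have "1*1 \<le> d*e" using h by (intro mult_mono) auto
    hence de: "d*e \<ge> 1" by simp
    have lt: "T k < n" using nn de by linarith
    have dif: "n - T k = nat d * nat e" using nn lt h(2,3) by (simp add: nat_mult_distrib[symmetric])
    have dd: "(n - T k) div nat d = nat e" using dif h(2) by simp
    show "(case case b of (u, d, e) \<Rightarrow> (nat ((u - 1) div 2), nat d) of
          (k, d) \<Rightarrow> (2 * int k + 1, int d, int ((n - T k) div d))) = b"
      using h by (simp add: be kk dd uk)
    show "(case b of (u, d, e) \<Rightarrow> (nat ((u - 1) div 2), nat d)) \<in> Sigma K D"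
      using lt dif by (simp add: be kk K_def D_def)
  qed
  finally show ?thesis .
qed

lemma negpart: "(\<Sum>x\<in>Sneg N. w x) = (\<Sum>x\<in>Spos N. w x)"
  by (rule sum.reindex_bij_witness[where i="\<lambda>(u,d,e). (-u,d,e)" and j="\<lambda>(u,d,e). (-u,d,e)"])
     (auto simp: Spos_def Sneg_def w_def)

lemma splitpm: "(\<Sum>x\<in>SS N. w x) = (\<Sum>x\<in>Spos N. w x) + (\<Sum>x\<in>Sneg N. w x)"
proof -
  have "SS N = Spos N \<union> Sneg N"
  proof
    show "SS N \<subseteq> Spos N \<union> Sneg N"
    proof
      fix x assume x: "x \<in> SS N"
      obtain u d e where xe: "x = (u,d,e)" by (cases x)
      have "u \<noteq> 0" using x xe by auto
      thus "x \<in> Spos N \<union> Sneg N" using x xe by (auto simp: Spos_def Sneg_def)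
    qed
  qed (auto simp: Spos_def Sneg_def)
  moreover have "Spos N \<inter> Sneg N = {}" by (auto simp: Spos_def Sneg_def)
  moreover have "finite (Spos N)" by (rule fin_sub[where N=N]) (auto simp: Spos_def)
  moreover have "finite (Sneg N)" by (rule fin_sub[where N=N]) (auto simp: Sneg_def)
  ultimately show ?thesis by (simp add: sum.union_disjoint)
qed

theorem theorem3p6:
  fixes n :: nat
  assumes "n \<ge> 1"
  shows "int (t n * n) =
    (\<Sum>k\<in>{k::nat. T k < n}. int (sigma_odd (n - T k)) - int (sigma_even (n - T k)))"
proof -
  have "2 * (\<Sum>k\<in>{k::nat. T k < n}. int (sigma_odd (n - T k)) - int (sigma_even (n - T k)))
     = (\<Sum>x\<in>SS (8*int n+1). w x)"
    using link[of n] splitpm[of "8*int n+1"] negpart[of "8*int n+1"] by simp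
  also have "\<dots> = 2 * int n * int (t n)" using lemMain lemB0 by simp
  finally show ?thesis by simp
qed

end
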